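(* Assume the setting of the context. For any $\Delta=(h,\Delta x)$, any $i\in\mathbb{N}$, any $j\in\{1,2\}$, any bounded $\mathsf{U},\mathsf{V}\in B(\mathcal{A}^{\Delta x})$ with $\mathsf{U}_k\le\mathsf{V}_k$ for all $k\in\mathbb{N}$, and any $(\mathsf{q}_1,\mathsf{q}_2),(\mathsf{m}_1,\mathsf{m}_2)\in\mathbb{R}^2$ such that $\theta:=\mathsf{q}_j-\mathsf{m}_j=\max_{k=1,2}\{\mathsf{q}_k-\mathsf{m}_k\}\ge0$, we have $$\mathcal{F}^\Delta_j\big(x_i,(\mathsf{q}_j,\mathsf{q}_{\bar\jmath}),\mathsf{U}+\theta\big)-\mathcal{F}^\Delta_j\big(x_i,(\mathsf{m}_j,\mathsf{m}_{\bar\jmath}),\mathsf{V}\big)\ge\rho\theta.$$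
   Context: Constants: $\rho>0$, $r<\rho$, $0<y_1<y_2$, $\gamma>1$, $\underline{x}\le0$ with $\rho\underline{x}+y_j>0$, $\lambda_1,\lambda_2\ge0$; $\bar\jmath=3-j$; $u(c)=\frac{c^{1-\gamma}}{1-\gamma}$ for $c>0$, $u(0)=-\infty$. Discretization $\Delta=(h,\Delta x)$ with $h,\Delta x>0$ and $\rho h<1$, $\lambda_jh<1$. Grid $x_i=\underline{x}+i\Delta x$, $i\in\mathbb{N}=\{0,1,2,\dots\}$, $\mathcal{A}^{\Delta x}=\{x_i\}$; $B(\mathcal{A}^{\Delta x})$ is the space of bounded real sequences $(\mathsf{U}_k)_{k\in\mathbb{N}}$. The $\mathbb{Q}_1$ basis: $\beta_k(x)=\max\{0,1-|x-x_k|/\Delta x\}$ for $x\ge\underline{x}$ (so $\beta_k\ge0$, $\sum_k\beta_k\equiv1$ on $[\underline{x},\infty)$, $\beta_k(x_i)=\delta_{ik}$). Admissible controls $\mathcal{C}^\Delta_j(x_i)=\{c\ge0: x_i+h(rx_i+y_j-c)\ge\underline{x}\}$, and $s_{i,j}(c)=rx_i+y_j-c$. The scheme: for $(\mathsf{q}_j,\mathsf{q}_{\bar\jmath})\in\mathbb{R}^2$, $\mathsf{U}\in B(\mathcal{A}^{\Delta x})$, $$\mathcal{F}^\Delta_j(x_i,(\mathsf{q}_j,\mathsf{q}_{\bar\jmath}),\mathsf{U})=\rho\mathsf{q}_j-(1-\rho h)\lambda_j(\mathsf{q}_{\bar\jmath}-\mathsf{q}_j)-\sup_{c\in\mathcal{C}^\Delta_j(x_i)}\Big\{u(c)+\frac{(1-\rho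 h)(1-\lambda_jh)}{h}\Big(\sum_k\beta_k(x_i+hs_{i,j}(c))\mathsf{U}_k-\mathsf{q}_j\Big)\Big\}.$$ *)

theory Defs
  imports "HOL-Analysis.Analysis"
begin

definition grid :: "real \<Rightarrow> real \<Rightarrow> nat \<Rightarrow> real" where
  "grid xlow dx i = xlow + real i * dx"

definition qbasis :: "real \<Rightarrow> real \<Rightarrow> nat \<Rightarrow> real \<Rightarrow> real" where
  "qbasis xlow dx k x = max 0 (1 - \<bar>x - grid xlow dx k\<bar> / dx)"

definition util :: "real \<Rightarrow> real \<Rightarrow> ereal" where
  "util gamma c = (if c > 0 then ereal (c powr (1 - gamma) / (1 - gamma)) else -\<infinity>)"

definition admissible :: "real \<Rightarrow> real \<Rightarrow> real \<Rightarrow> real \<Rightarrow> real \<Rightarrow> real set" where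
  "admissible r xlow h y x = {c. c \<ge> 0 \<and> x + h * (r * x + y - c) \<ge> xlow}"

text \<open>The scheme F_j(x_i,(q_j,q_jbar),U); here y = y_j, lam = lambda_j,
  q = q_j, qb = q_jbar. Values in the extended reals (the supremum may be -infinity).\<close>
definition scheme ::
  "real \<Rightarrow> real \<Rightarrow> real \<Rightarrow> real \<Rightarrow> real \<Rightarrow> real \<Rightarrow> real \<Rightarrow> real \<Rightarrow>
   nat \<Rightarrow> real \<Rightarrow> real \<Rightarrow> (nat \<Rightarrow> real) \<Rightarrow> ereal" where
  "scheme rho r gamma xlow h dx y lam i q qb U =
     ereal (rho * q - (1 - rho * h) * lam * (qb - q))
     - (SUP c \<in> admissible r xlow h y (grid xlow dx i).
          util gamma c
          + ereal ((1 - rho * h) * (1 - lam * h) / h *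
              ((\<Sum>k. qbasis xlow dx k (grid xlow dx i + h * (r * grid xlow dx i + y - c)) * U k) - q)))"

end

theory Submission
  imports Defs
begin

lemma qb_alt: "dx > 0 \<Longrightarrow> qbasis xlow dx k z = max 0 (1 - \<bar>(z - xlow)/dx - real k\<bar>)"
proof -
  assume d: "dx > 0"
  have "\<bar>z - grid xlow dx k\<bar> / dx = \<bar>(z - grid xlow dx k) / dx\<bar>" using d by simp
  also have "(z - grid xlow dx k) / dx = (z - xlow)/dx - real k" using d
    by (simp add: grid_def field_simps)
  finally show ?thesis by (simp add: qbasis_def)
qed

lemma qb_sum:
  assumes d: "dx > 0" and z: "z \<ge> xlow"
  shows "\<exists>N. finite N \<and> (\<forall>k. k \<notin> N \<longrightarrow> qbasis xlow dx k z = 0)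
     \<and> (\<forall>k. qbasis xlow dx k z \<ge> 0) \<and> sum (\<lambda>k. qbasis xlow dx k z) N = 1"
proof -
  define t where "t = (z - xlow)/dx"
  have t0: "t \<ge> 0" using d z by (simp add: t_def)
  define n where "n = nat \<lfloor>t\<rfloor>"
  have n1: "real n \<le> t" "t < real n + 1" using t0 unfolding n_def by linarith+
  have q: "\<And>k. qbasis xlow dx k z = max 0 (1 - \<bar>t - real k\<bar>)" using qb_alt[OF d] t_def by simp
  have out: "\<forall>k. k \<notin> {n, Suc n} \<longrightarrow> qbasis xlow dx k z = 0"
  proof (intro allI impI)
    fix k assume "k \<notin> {n, Suc n}"
    then have "k < n \<or> k > Suc n" by auto
    then have "real k + 1 \<le> real n \<or> real k \<ge> real n + 2" by auto
    then have "\<bar>t - real k\<bar> \<ge> 1" using n1 by linarith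
    then have "1 - \<bar>t - real k\<bar> \<le> 0" by linarith
    then show "qbasis xlow dx k z = 0" unfolding q by (rule max_absorb1)
  qed
  have b1: "qbasis xlow dx n z = 1 - (t - real n)"
  proof -
    have "\<bar>t - real n\<bar> = t - real n" using n1 by linarith
    then show ?thesis unfolding q using n1 by linarith
  qed
  have b2: "qbasis xlow dx (Suc n) z = t - real n"
  proof -
    have "\<bar>t - real (Suc n)\<bar> = real n + 1 - t" using n1 by simp
    then show ?thesis unfolding q using n1 by simp
  qed
  have "sum (\<lambda>k. qbasis xlow dx k z) {n, Suc n} = 1"
    by (simp add: b1 b2)
  moreover have "\<forall>k. qbasis xlow dx k z \<ge> 0" by (simp add: qbasis_def)
  moreover have "finite {n, Suc n}" by simp
  ultimately show ?thesis using out by (intro exI[of _ "{n, Suc n}"]) (simp only: simp_thms)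
qed

lemma fin_lem:
  fixes S1 S2 :: ereal
  assumes "S1 \<le> S2" "E2 + t \<le> E1"
  shows "ereal E2 - S2 + ereal t \<le> ereal E1 - S1"
proof (cases S2)
  case (real s2)
  then show ?thesis using assms by (cases S1) auto
next
  case PInf
  then show ?thesis by simp
next
  case MInf
  then have "S1 = -\<infinity>" using assms by simp
  then show ?thesis using MInf by simp
qed


theorem mainTheorem10:
  fixes rho r gamma xlow h dx :: real
    and y lam q m :: "nat \<Rightarrow> real"
    and U V :: "nat \<Rightarrow> real"
    and i j :: nat
  assumes rho_pos: "rho > 0" and r_lt: "r < rho"
    and y_pos: "0 < y 1" and y_lt: "y 1 < y 2"
    and gamma_gt: "gamma > 1"
    and xlow_le: "xlow \<le> 0"
    and budget: "\<And>jj. jj \<in> {1, 2} \<Longrightarrow> rho * xlow + y jj > 0"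
    and lam_nonneg: "\<And>jj. jj \<in> {1, 2} \<Longrightarrow> lam jj \<ge> 0"
    and h_pos: "h > 0" and dx_pos: "dx > 0"
    and rho_h: "rho * h < 1"
    and lam_h: "\<And>jj. jj \<in> {1, 2} \<Longrightarrow> lam jj * h < 1"
    and j_in: "j \<in> {1, 2}"
    and U_bdd: "bounded (range U)" and V_bdd: "bounded (range V)"
    and U_le_V: "\<And>k. U k \<le> V k"
    and theta_max: "q j - m j = max (q 1 - m 1) (q 2 - m 2)"
    and theta_nonneg: "q j - m j \<ge> 0"
  shows "scheme rho r gamma xlow h dx (y j) (lam j) i (q j) (q (3 - j)) (\<lambda>k. U k + (q j - m j))
         \<ge> scheme rho r gamma xlow h dx (y j) (lam j) i (m j) (m (3 - j)) V + ereal (rho * (q j - m j))"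
proof -
  define x where "x = grid xlow dx i"
  define th where "th = q j - m j"
  define A where "A = (1 - rho * h) * (1 - lam j * h) / h"
  define Bc where "Bc = (1 - rho * h) * lam j"
  have A0: "A \<ge> 0" unfolding A_def using rho_h lam_h[OF j_in] h_pos by simp
  have B0: "Bc \<ge> 0" unfolding Bc_def using rho_h lam_nonneg[OF j_in] by simp
  have jb: "q (3 - j) - m (3 - j) \<le> th" using theta_max j_in unfolding th_def by auto
  let ?S1 = "(SUP c \<in> admissible r xlow h (y j) x.
          util gamma c + ereal (A * ((\<Sum>k. qbasis xlow dx k (x + h * (r * x + y j - c)) * (U k + th)) - q j)))"
  let ?S2 = "(SUP c \<in> admissible r xlow h (y j) x.
          util gamma c + ereal (A * ((\<Sum>k. qbasis xlow dx k (x + h * (r * x + y j - c)) * V k) - m j)))"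
  have S: "?S1 \<le> ?S2"
  proof (rule SUP_mono)
    fix c assume c: "c \<in> admissible r xlow h (y j) x"
    define z where "z = x + h * (r * x + y j - c)"
    have z: "z \<ge> xlow" using c unfolding admissible_def z_def by simp
    obtain N where N: "finite N" "\<forall>k. k \<notin> N \<longrightarrow> qbasis xlow dx k z = 0"
      "\<forall>k. qbasis xlow dx k z \<ge> 0" "sum (\<lambda>k. qbasis xlow dx k z) N = 1"
      using qb_sum[OF dx_pos z] by blast
    have e: "(\<Sum>k. qbasis xlow dx k z * f k) = (\<Sum>k\<in>N. qbasis xlow dx k z * f k)" for f
      by (rule suminf_finite) (use N in auto)
    have "(\<Sum>k\<in>N. qbasis xlow dx k z * (U k + th)) = (\<Sum>k\<in>N. qbasis xlow dx k z * U k) + th"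
      using N(4) by (simp add: distrib_left sum.distrib sum_distrib_right[symmetric])
    moreover have "(\<Sum>k\<in>N. qbasis xlow dx k z * U k) \<le> (\<Sum>k\<in>N. qbasis xlow dx k z * V k)"
      by (rule sum_mono) (use N(3) U_le_V in \<open>simp add: mult_left_mono\<close>)
    ultimately have "A * ((\<Sum>k. qbasis xlow dx k z * (U k + th)) - q j)
        \<le> A * ((\<Sum>k. qbasis xlow dx k z * V k) - m j)"
      unfolding e using A0 th_def by (intro mult_left_mono) auto
    then show "\<exists>c'\<in>admissible r xlow h (y j) x.
          util gamma c + ereal (A * ((\<Sum>k. qbasis xlow dx k (x + h * (r * x + y j - c)) * (U k + th)) - q j))
        \<le> util gamma c' + ereal (A * ((\<Sum>k. qbasis xlow dx k (x + h * (r * x + y j - c')) * V k) - m j))"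
      using c unfolding z_def by (intro bexI[of _ c]) (auto intro: add_left_mono)
  qed
  define E1 where "E1 = rho * q j - Bc * (q (3 - j) - q j)"
  define E2 where "E2 = rho * m j - Bc * (m (3 - j) - m j)"
  have E: "E1 \<ge> E2 + rho * th"
  proof -
    have "Bc * (q (3 - j) - m (3 - j) - th) \<le> 0" using B0 jb by (simp add: mult_nonneg_nonpos)
    then show ?thesis unfolding E1_def E2_def th_def by (simp add: algebra_simps)
  qed
  have fin: "ereal E1 - ?S1 \<ge> ereal E2 - ?S2 + ereal (rho * th)"
    by (rule fin_lem[OF S E])
  have eq1: "scheme rho r gamma xlow h dx (y j) (lam j) i (q j) (q (3 - j)) (\<lambda>k. U k + (q j - m j)) = ereal E1 - ?S1"
    unfolding scheme_def E1_def A_def Bc_def x_def th_def by (rule refl)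
  have eq2: "scheme rho r gamma xlow h dx (y j) (lam j) i (m j) (m (3 - j)) V = ereal E2 - ?S2"
    unfolding scheme_def E2_def A_def Bc_def x_def th_def by (rule refl)
  show ?thesis using fin unfolding eq1 eq2 th_def .
qed

end
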